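(* Let $T$ be a rooted ordered tree with $n$ vertices and root $r$. The straight-line drawing of $T$ produced by Algorithm 1 is monotone (and planar), places $r$ at $(0,0)$, respects the order of the children of every vertex, and places every vertex at a grid point $(x,y)$ with $x,y\in\{0,1,\dots,n-1\}$; i.e., it fits on an $n\times n$ grid.
   Context: $T_v$ is the subtree rooted at $v$, $|T_v|$ its number of vertices. Strategy 1: for a non-leaf vertex $u$ with assigned $a_1(u)<a_2(u)$ and children $v_1,\dots,v_m$ in order, set $a_1(v_1)=a_1(u)$, $a_1(v_i)=a_2(v_{i-1})$ for $1<i\le m$, and $a_2(v_i)=a_1(v_i)+(a_2(u)-a_1(u))\cdot\frac{|T_{v_i}|}{|T_u|-1}$. Point rule $P_1(\theta_1,\theta_2)$ for $0\le\theta_1<\theta_2\le\frac{\pi}{2}$, with $d=\lceil\frac{1}{\theta_2-\theta_1}\rceil$: (i) if $\theta_2-\theta_1>\frac{\pi}{4}$: $(1,1)$; (ii) if $\arctan(\frac12)<\theta_2-\theta_1\le\frac{\pi}{4}$: $(1,2)$ if $\theta_1\ge\frac{\pi}{4}$, $(1,1)$ if $\arctan(\frac12)\le\theta_1<\frac{\pi}{4}$, $(2,1)$ if $\theta_1<\arctan(\frac12)$; (iii) if $\theta_2-\theta_1\le\arctan(\frac12)$: $(d,\lfloor\tan(\theta_1)d+1\rfloor)$ if $\theta_2\le\frac{\pi}{4}$, $(1,1)$ if $\theta_1<\frac{\pi}{4}<\theta_2$, $(\lfloor\tan(\frac{\pi}{2}-\theta_2)d+1\rfloor,d)$ if $\theta_1\ge\frac{\pi}{4}$.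 Algorithm 1 (input: rooted ordered tree $T$ with root $r$): set $a_1(r)=0$, $a_2(r)=\frac{\pi}{2}$ and assign angles to all other vertices top-down by Strategy 1; place $r$ at $(0,0)$; top-down, place each child $v$ of an already placed vertex $u$ at $(x_u,y_u)+P_1(a_1(v),a_2(v))$. A path $p_0,\dots,p_k$ in a straight-line drawing is monotone if there is a line $\ell$ such that the orthogonal projections of $p_0,\dots,p_k$ onto $\ell$ appear along $\ell$ in this order; a drawing is monotone if every pair of vertices is joined by a monotone path. *)

theory Defs
  imports "HOL-Analysis.Analysis"
begin

text \<open>A rooted ordered tree: a node with an ordered list of child subtrees.
  Vertices are identified with positions: lists of child indices from the root.\<close>

datatype otree = Node "otree list"

fun kids :: "otree \<Rightarrow> otree list" where
  "kids (Node ts) = ts"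

fun tsize :: "otree \<Rightarrow> nat" where
  "tsize (Node ts) = Suc (sum_list (map tsize ts))"

fun valid_pos :: "otree \<Rightarrow> nat list \<Rightarrow> bool" where
  "valid_pos t [] = True"
| "valid_pos t (i # p) = (i < length (kids t) \<and> valid_pos (kids t ! i) p)"

definition verts :: "otree \<Rightarrow> nat list set" where
  "verts T = {p. valid_pos T p}"

fun subtree :: "otree \<Rightarrow> nat list \<Rightarrow> otree" where
  "subtree t [] = t"
| "subtree t (i # p) = subtree (kids t ! i) p"

definition tree_edge :: "otree \<Rightarrow> nat list \<Rightarrow> nat list \<Rightarrow> bool" where
  "tree_edge T p q \<longleftrightarrow> p \<in> verts T \<and> q \<in> verts T \<and> (\<exists>i. q = p @ [i])"

definition adjacent :: "otree \<Rightarrow> nat list \<Rightarrow> nat list \<Rightarrow> bool" where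
  "adjacent T p q \<longleftrightarrow> tree_edge T p q \<or> tree_edge T q p"

text \<open>For a vertex u with children ts, interval (a1,a2) and N = |T_u|:
  left end a_1(v_i) of the i-th child (0-based); a_1(v_0) = a_1(u),
  a_1(v_{i+1}) = a_2(v_i) = a_1(v_i) + (a2 - a1) * |T_{v_i}| / (|T_u| - 1).\<close>
fun child_start :: "real \<Rightarrow> real \<Rightarrow> nat \<Rightarrow> otree list \<Rightarrow> nat \<Rightarrow> real" where
  "child_start a1 a2 N ts 0 = a1"
| "child_start a1 a2 N ts (Suc i) =
     child_start a1 a2 N ts i + (a2 - a1) * real (tsize (ts ! i)) / (real N - 1)"

definition child_interval :: "otree \<Rightarrow> real \<Rightarrow> real \<Rightarrow> nat \<Rightarrow> real \<times> real" where
  "child_interval t a1 a2 i =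
     (let b1 = child_start a1 a2 (tsize t) (kids t) i
      in (b1, b1 + (a2 - a1) * real (tsize (kids t ! i)) / (real (tsize t) - 1)))"

text \<open>angles t a1 a2 p = (a_1(p), a_2(p)) when the root of t gets (a1,a2).\<close>
fun angles :: "otree \<Rightarrow> real \<Rightarrow> real \<Rightarrow> nat list \<Rightarrow> real \<times> real" where
  "angles t a1 a2 [] = (a1, a2)"
| "angles t a1 a2 (i # p) =
     (case child_interval t a1 a2 i of (b1, b2) \<Rightarrow> angles (kids t ! i) b1 b2 p)"

definition P1 :: "real \<Rightarrow> real \<Rightarrow> int \<times> int" where
  "P1 \<theta>1 \<theta>2 =
    (let d = \<lceil>1 / (\<theta>2 - \<theta>1)\<rceil> in
     if \<theta>2 - \<theta>1 > pi / 4 then (1, 1)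
     else if arctan (1/2) < \<theta>2 - \<theta>1 then
       (if \<theta>1 \<ge> pi / 4 then (1, 2)
        else if arctan (1/2) \<le> \<theta>1 then (1, 1)
        else (2, 1))
     else
       (if \<theta>2 \<le> pi / 4 then (d, \<lfloor>tan \<theta>1 * real_of_int d + 1\<rfloor>)
        else if \<theta>1 < pi / 4 then (1, 1)
        else (\<lfloor>tan (pi / 2 - \<theta>2) * real_of_int d + 1\<rfloor>, d)))"

text \<open>place t a1 a2 p: position of vertex p relative to the root of t, where the
  root of t has angle interval (a1,a2); each child v of u is placed at
  pos(u) + P_1(a_1(v), a_2(v)).\<close>
fun place :: "otree \<Rightarrow> real \<Rightarrow> real \<Rightarrow> nat list \<Rightarrow> int \<times> int" where
  "place t a1 a2 [] = (0, 0)"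
| "place t a1 a2 (i # p) =
     (case child_interval t a1 a2 i of (b1, b2) \<Rightarrow>
        (let q = P1 b1 b2; r = place (kids t ! i) b1 b2 p
         in (fst q + fst r, snd q + snd r)))"

definition alg1 :: "otree \<Rightarrow> nat list \<Rightarrow> int \<times> int" where
  "alg1 T = place T 0 (pi / 2)"

definition pt :: "(nat list \<Rightarrow> int \<times> int) \<Rightarrow> nat list \<Rightarrow> real \<times> real" where
  "pt f p = (real_of_int (fst (f p)), real_of_int (snd (f p)))"

definition dotp :: "real \<times> real \<Rightarrow> real \<times> real \<Rightarrow> real" where
  "dotp a b = fst a * fst b + snd a * snd b"

definition monotone_points :: "(real \<times> real) list \<Rightarrow> bool" where
  "monotone_points ps \<longleftrightarrow>
     (\<exists>d. d \<noteq> (0, 0) \<and> (\<forall>i. Suc i < length ps \<longrightarrow> dotp d (ps ! i) < dotp d (ps ! Suc i)))"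

definition is_tree_path :: "otree \<Rightarrow> nat list list \<Rightarrow> nat list \<Rightarrow> nat list \<Rightarrow> bool" where
  "is_tree_path T vs u v \<longleftrightarrow> vs \<noteq> [] \<and> hd vs = u \<and> last vs = v \<and> set vs \<subseteq> verts T \<and>
     (\<forall>i. Suc i < length vs \<longrightarrow> adjacent T (vs ! i) (vs ! Suc i))"

definition monotone_drawing :: "otree \<Rightarrow> (nat list \<Rightarrow> int \<times> int) \<Rightarrow> bool" where
  "monotone_drawing T f \<longleftrightarrow>
     (\<forall>u\<in>verts T. \<forall>v\<in>verts T. \<exists>vs. is_tree_path T vs u v \<and> monotone_points (map (pt f) vs))"

definition planar_drawing :: "otree \<Rightarrow> (nat list \<Rightarrow> int \<times> int) \<Rightarrow> bool" where
  "planar_drawing T f \<longleftrightarrow> inj_on f (verts T) \<and>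
     (\<forall>a b c d. tree_edge T a b \<and> tree_edge T c d \<and> (a, b) \<noteq> (c, d) \<longrightarrow>
        closed_segment (pt f a) (pt f b) \<inter> closed_segment (pt f c) (pt f d)
          \<subseteq> pt f ` ({a, b} \<inter> {c, d}))"

text \<open>Counterclockwise angle from vector a to vector b, in (0, 2 pi].\<close>
definition ccw_angle :: "real \<times> real \<Rightarrow> real \<times> real \<Rightarrow> real" where
  "ccw_angle a b =
     (let t = Arg (Complex (fst b) (snd b) / Complex (fst a) (snd a))
      in if t \<le> 0 then t + 2 * pi else t)"

definition vec :: "(nat list \<Rightarrow> int \<times> int) \<Rightarrow> nat list \<Rightarrow> nat list \<Rightarrow> real \<times> real" where
  "vec f u v = pt f v - pt f u"

definition respects_order :: "otree \<Rightarrow> (nat list \<Rightarrow> int \<times> int) \<Rightarrow> bool" where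
  "respects_order T f \<longleftrightarrow>
     (\<forall>u\<in>verts T. let m = length (kids (subtree T u)) in
        (u \<noteq> [] \<longrightarrow> (\<forall>i j. i < j \<and> j < m \<longrightarrow>
            ccw_angle (vec f u (butlast u)) (vec f u (u @ [i]))
              < ccw_angle (vec f u (butlast u)) (vec f u (u @ [j])))) \<and>
        (u = [] \<longrightarrow> (\<forall>i j. 0 < i \<and> i < j \<and> j < m \<longrightarrow>
            ccw_angle (vec f u (u @ [0])) (vec f u (u @ [i]))
              < ccw_angle (vec f u (u @ [0])) (vec f u (u @ [j])))))"

end

theory Submission
  imports Defs
begin


lemma tan_gt_self: assumes "0 < x" "x < pi/2" shows "x < tan x"
proof -
  define h where "h = x/2"
  have h: "0 < h" "h < pi/4" using assms by (auto simp: h_def)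
  have ch: "cos h \<noteq> 0" using h by (intro cos_gt_zero_pi[THEN less_imp_neq, symmetric]) auto
  have c2: "cos (2*h) \<noteq> 0" using assms by (intro cos_gt_zero_pi[THEN less_imp_neq, symmetric]) (auto simp: h_def)
  have t0: "0 < tan h" using h by (intro tan_gt_zero) auto
  have tge: "h \<le> tan h" using abs_tan_ge[of h] h t0 by auto
  have t1: "tan h < 1" using tan_mono_lt_eq[of h "pi/4"] h tan_45 by auto
  have "tan x = 2 * tan h / (1 - (tan h)\<^sup>2)" using tan_double[OF ch c2] by (simp add: h_def)
  moreover have "2 * tan h < 2 * tan h / (1 - (tan h)\<^sup>2)"
  proof -
    have "tan h * tan h < 1 * 1" using t0 t1 by (intro mult_strict_mono) auto
    hence p: "0 < 1 - (tan h)\<^sup>2" "1 - (tan h)\<^sup>2 < 1" using t0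
      by (auto simp: power2_eq_square)
    show ?thesis using p t0 by (simp add: less_divide_eq)
  qed
  ultimately show ?thesis using tge by (simp add: h_def)
qed

lemma tan_diff_gt: assumes "0 \<le> a" "a < b" "b < pi/2" shows "b - a < tan b - tan a"
proof -
  have "cos a > 0" "cos b > 0" "cos (b - a) > 0" using assms
    by (auto intro!: cos_gt_zero_pi)
  hence ca: "cos a \<noteq> 0" "cos b \<noteq> 0" "cos (b - a) \<noteq> 0" by auto
  have "tan (b - a) = (tan b - tan a) / (1 + tan b * tan a)" using tan_diff[OF ca(2) ca(1) ca(3)] .
  moreover have "0 \<le> tan a" "0 \<le> tan b" using assms by (auto intro: tan_pos_pi2_le)
  moreover have "b - a < tan (b - a)" using assms by (intro tan_gt_self) auto
  ultimately have "b - a < (tan b - tan a) / (1 + tan b * tan a)" by simp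
  also have "\<dots> \<le> tan b - tan a"
  proof -
    have "0 \<le> tan b - tan a" using tan_mono_le[of a b] assms by auto
    moreover have "1 \<le> 1 + tan b * tan a" using \<open>0 \<le> tan a\<close> \<open>0 \<le> tan b\<close> by simp
    ultimately show ?thesis by (simp add: divide_le_eq mult_le_cancel_left1 mult.commute)
  qed
  finally show ?thesis .
qed

lemma atan_half_gt: "pi/8 < arctan (1/2)"
proof -
  have "arctan (1/2) + arctan (1/2) = arctan (4/3)" using arctan_add[of "1/2" "1/2"] by simp
  moreover have "pi/4 < arctan (4/3)" using arctan_less_iff[of 1 "4/3"] arctan_one by simp
  ultimately show ?thesis by simp
qed

lemma atan_half_le: "arctan (1/2) \<le> 1/2" by (rule arctan_le_self) simp

lemma sub_case:
  fixes d :: int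
  assumes "0 \<le> a" "a < b" "b \<le> pi/4" "1/(b-a) \<le> d"
  shows "1 \<le> \<lfloor>tan a * d + 1\<rfloor> \<and> \<lfloor>tan a * d + 1\<rfloor> \<le> d \<and>
         a < arctan (\<lfloor>tan a * d + 1\<rfloor> / d) \<and> arctan (\<lfloor>tan a * d + 1\<rfloor> / d) < b"
proof -
  define y where "y = \<lfloor>tan a * d + 1\<rfloor>"
  have dp: "0 < real_of_int d" using assms(2,4) by (smt (verit) divide_pos_pos)
  have ta: "0 \<le> tan a" using assms by (intro tan_pos_pi2_le) auto
  have "1 \<le> y" using ta dp unfolding y_def by (simp add: le_floor_iff)
  have y1: "tan a * d < y" unfolding y_def by linarith
  have y2: "y \<le> tan a * d + 1" unfolding y_def by linarith
  have s1: "tan a < y / d" using y1 dp by (simp add: less_divide_eq)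
  have "1 \<le> d * (b - a)" using assms(2,4) by (simp add: divide_le_eq)
  hence "1/d \<le> b - a" using dp by (simp add: divide_le_eq mult.commute)
  have "y / d \<le> tan a + 1/d" using y2 dp by (simp add: divide_le_eq algebra_simps)
  also have "\<dots> \<le> tan a + (b - a)" using \<open>1/d \<le> b - a\<close> by simp
  also have "\<dots> < tan b" using tan_diff_gt[of a b] assms pi_gt_zero by linarith
  finally have s2: "y / d < tan b" .
  have "-(pi/2) < b" "pi/4 < pi/2" using assms pi_gt_zero by linarith+
  hence "tan b \<le> 1" using tan_mono_le[of b "pi/4"] assms tan_45 by simp
  hence "y / d < 1" using s2 by linarith
  hence "real_of_int y < real_of_int d" using dp by (simp add: divide_less_eq)
  hence "y < d" by simp
  have "a < arctan (y/d)" using s1 arctan_less_iff[of "tan a" "y/d"] arctan_tan[of a] assms pi_gt_zero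
    by auto
  moreover have "arctan (y/d) < b" using s2 arctan_less_iff[of "y/d" "tan b"] arctan_tan[of b] assms pi_gt_zero
    by auto
  ultimately show ?thesis using \<open>1 \<le> y\<close> \<open>y < d\<close> unfolding y_def by simp
qed




definition goodpt :: "real \<Rightarrow> real \<Rightarrow> int \<times> int \<Rightarrow> bool" where
  "goodpt a b q \<longleftrightarrow> 1 \<le> fst q \<and> 1 \<le> snd q \<and> real_of_int (fst q) \<le> (pi/2)/(b-a) \<and>
     real_of_int (snd q) \<le> (pi/2)/(b-a) \<and> a < arctan (real_of_int (snd q) / real_of_int (fst q)) \<and> arctan (real_of_int (snd q) / real_of_int (fst q)) < b"

lemma arctan_two: "arctan 2 = pi/2 - arctan (1/2)"
  using arctan_inverse[of 2] by simp

lemma arctan_swap: assumes "0 < x" "0 < y" shows "arctan (y/x) = pi/2 - arctan (x/y)"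
  using arctan_inverse[of "x/y"] assms by simp

lemma P1_good: assumes "0 \<le> a" "a < b" "b \<le> pi/2" shows "goodpt a b (P1 a b)"
proof -
  define w where "w = b - a"
  define A where "A = arctan (1/2)"
  have w0: "0 < w" using assms by (simp add: w_def)
  have A8: "pi/8 < A" using atan_half_gt by (simp add: A_def)
  have Ah: "A \<le> 1/2" using atan_half_le by (simp add: A_def)
  have p3: "3 < pi" by (rule pi_gt3)
  have one_ok: "1 \<le> (pi/2)/w" using w0 assms by (simp add: le_divide_eq w_def)
  have at1: "arctan 1 = pi/4" by (rule arctan_one)
  show ?thesis
  proof (cases "pi/4 < w")
    case True
    hence "P1 a b = (1,1)" by (simp add: P1_def w_def)
    thus ?thesis using True one_ok assms at1 unfolding goodpt_def w_def by auto
  next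
    case c1: False
    show ?thesis
    proof (cases "A < w")
      case c2: True
      have two_ok: "2 \<le> (pi/2)/w" using w0 c1 by (simp add: le_divide_eq)
      show ?thesis
      proof (cases "pi/4 \<le> a")
        case True
        hence "P1 a b = (1,2)" using c1 c2 by (simp add: P1_def w_def A_def)
        thus ?thesis using True c1 c2 two_ok one_ok assms A8 arctan_two unfolding goodpt_def w_def A_def
          by auto
      next
        case c3: False
        show ?thesis
        proof (cases "A \<le> a")
          case True
          hence "P1 a b = (1,1)" using c1 c2 c3 by (simp add: P1_def w_def A_def)
          thus ?thesis using True c1 c2 c3 one_ok assms A8 at1 unfolding goodpt_def w_def A_def
            by auto
        next
          case False
          hence "P1 a b = (2,1)" using c1 c2 c3 by (simp add: P1_def w_def A_def)
          thus ?thesis using False c1 c2 c3 two_ok one_ok assms A8 unfolding goodpt_def w_def A_def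
            by auto
        qed
      qed
    next
      case c2: False
      define d where "d = \<lceil>1 / w\<rceil>"
      have d1: "1/(b-a) \<le> d" unfolding d_def w_def by simp
      have d2: "real_of_int d \<le> (pi/2)/w"
      proof -
        have "real_of_int d < 1/w + 1" using ceiling_correct[of "1/w"] unfolding d_def by linarith
        also have "1/w + 1 \<le> (pi/2)/w"
        proof -
          have "w \<le> pi/2 - 1" using c2 Ah p3 by linarith
          hence "1 \<le> (pi/2 - 1)/w" using w0 by (simp add: le_divide_eq)
          moreover have "(pi/2)/w = 1/w + (pi/2 - 1)/w" by (simp add: diff_divide_distrib)
          ultimately show ?thesis by simp
        qed
        finally show ?thesis by simp
      qed
      have lw: "\<not> (pi/4 < b - a)" "\<not> (arctan (1/2) < b - a)" using c1 c2 by (simp_all add: w_def A_def)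
      show ?thesis
      proof (cases "b \<le> pi/4")
        case True
        have e: "P1 a b = (d, \<lfloor>tan a * d + 1\<rfloor>)" using True lw by (simp add: P1_def d_def w_def Let_def)
        from sub_case[OF assms(1,2) True d1] have h: "1 \<le> \<lfloor>tan a * d + 1\<rfloor>" "\<lfloor>tan a * d + 1\<rfloor> \<le> d"
          "a < arctan (\<lfloor>tan a * d + 1\<rfloor> / d)" "arctan (\<lfloor>tan a * d + 1\<rfloor> / d) < b" by blast+
        have "1 \<le> d" using h(1,2) by linarith
        show ?thesis using d2 one_ok h \<open>1 \<le> d\<close> unfolding e goodpt_def w_def
          by simp
      next
        case c4: False
        show ?thesis
        proof (cases "a < pi/4")
          case True
          hence "P1 a b = (1,1)" using c4 lw by (simp add: P1_def)
          thus ?thesis using True c4 one_ok assms at1 unfolding goodpt_def w_def by auto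
        next
          case False
          have e: "P1 a b = (\<lfloor>tan (pi/2 - b) * d + 1\<rfloor>, d)" using False c4 lw
            by (simp add: P1_def d_def w_def Let_def)
          have d1': "1/((pi/2 - a) - (pi/2 - b)) \<le> d" using d1 by simp
          have s: "0 \<le> pi/2 - b" "pi/2 - b < pi/2 - a" "pi/2 - a \<le> pi/4" using assms False by auto
          from sub_case[OF s d1'] 
          have h: "1 \<le> \<lfloor>tan (pi/2 - b) * d + 1\<rfloor>" "\<lfloor>tan (pi/2 - b) * d + 1\<rfloor> \<le> d"
            "pi/2 - b < arctan (\<lfloor>tan (pi/2 - b) * d + 1\<rfloor> / d)"
            "arctan (\<lfloor>tan (pi/2 - b) * d + 1\<rfloor> / d) < pi/2 - a" by auto
          have sw: "arctan (d / \<lfloor>tan (pi/2 - b) * d + 1\<rfloor>) = pi/2 - arctan (\<lfloor>tan (pi/2 - b) * d + 1\<rfloor> / d)"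
          proof (rule arctan_swap)
            have "0 < \<lfloor>tan (pi/2 - b) * d + 1\<rfloor>" "0 < d" using h(1,2) by linarith+
            thus "0 < real_of_int \<lfloor>tan (pi/2 - b) * d + 1\<rfloor>" "0 < real_of_int d"
              by (simp_all only: of_int_0_less_iff)
          qed
          have "1 \<le> d" using h(1,2) by linarith
          show ?thesis unfolding e goodpt_def using h sw d2 \<open>1 \<le> d\<close> one_ok by (auto simp: w_def)
        qed
      qed
    qed
  qed
qed




definition wcone :: "real \<Rightarrow> real \<Rightarrow> real \<times> real \<Rightarrow> bool" where
  "wcone a b v \<longleftrightarrow> 0 \<le> fst v \<and> 0 \<le> snd v \<and> 0 < cos a * snd v - sin a * fst v \<and>
     0 < sin b * fst v - cos b * snd v"

definition rp :: "int \<times> int \<Rightarrow> real \<times> real" where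
  "rp q = (real_of_int (fst q), real_of_int (snd q))"

lemma good_cone: assumes "0 \<le> a" "a < b" "b \<le> pi/2" "goodpt a b q" shows "wcone a b (rp q)"
proof -
  obtain x y where q: "q = (x, y)" by force
  have x: "1 \<le> x" "1 \<le> y" and ang: "a < arctan (y / x)" "arctan (y/x) < b"
    using assms(4) unfolding goodpt_def q by auto
  have xp: "0 < real_of_int x" "0 < real_of_int y" using x by simp_all
  have ca: "0 < cos a" using assms by (intro cos_gt_zero_pi) auto
  have "tan a < tan (arctan (y/x))"
    using ang assms arctan_bounded[of "y/x"] by (intro tan_monotone) auto
  hence "tan a < y / x" by (simp only: tan_arctan)
  hence "sin a / cos a < y / x" by (simp add: tan_def)
  hence "sin a * x < y * cos a" using ca xp by (simp add: divide_less_eq less_divide_eq field_simps)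
  hence l1: "0 < cos a * y - sin a * x" by (simp add: algebra_simps)
  have l2: "0 < sin b * x - cos b * y"
  proof (cases "b = pi/2")
    case True hence "cos b = 0" "sin b = 1" by (simp_all only: cos_pi_half sin_pi_half)
    thus ?thesis using xp by simp
  next
    case False
    hence b2: "b < pi/2" using assms by simp
    have cb: "0 < cos b" using assms b2 by (intro cos_gt_zero_pi) auto
    have "tan (arctan (y/x)) < tan b"
      using ang assms b2 arctan_bounded[of "y/x"] by (intro tan_monotone) auto
    hence "y / x < tan b" by (simp only: tan_arctan)
    hence "y / x < sin b / cos b" by (simp add: tan_def)
    hence "y * cos b < sin b * x" using cb xp by (simp add: divide_less_eq less_divide_eq field_simps)
    thus ?thesis by (simp add: algebra_simps)
  qed
  show ?thesis unfolding wcone_def rp_def q using xp l1 l2 by simp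
qed

lemma P1_cone: assumes "0 \<le> a" "a < b" "b \<le> pi/2" shows "wcone a b (rp (P1 a b))"
  using good_cone[OF assms P1_good[OF assms]] .

lemma P1_pos: assumes "0 \<le> a" "a < b" "b \<le> pi/2" shows "1 \<le> fst (P1 a b)" "1 \<le> snd (P1 a b)"
  using P1_good[OF assms] unfolding goodpt_def by auto

lemma cone_add: "wcone a b u \<Longrightarrow> wcone a b v \<Longrightarrow> wcone a b (u + v)"
  unfolding wcone_def by (simp add: algebra_simps)

lemma cone_scale: "0 < t \<Longrightarrow> wcone a b u \<Longrightarrow> wcone a b (t *\<^sub>R u)"
proof -
  assume t: "0 < t" and c: "wcone a b u"
  have "0 < t * (cos a * snd u - sin a * fst u)" "0 < t * (sin b * fst u - cos b * snd u)"
    using t c unfolding wcone_def by auto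
  thus ?thesis using c t unfolding wcone_def by (simp add: algebra_simps)
qed

lemma L_mono: assumes "0 \<le> x" "0 \<le> y" "0 \<le> a" "a \<le> a'" "a' \<le> pi/2"
  shows "cos a' * y - sin a' * x \<le> cos a * y - sin a * x"
proof -
  have "cos a' \<le> cos a" using assms by (intro cos_monotone_0_pi_le) auto
  moreover have "sin a \<le> sin a'" using assms by (intro sin_monotone_2pi_le) auto
  ultimately show ?thesis using assms by (smt (verit) mult_right_mono)
qed

lemma cone_mono: assumes "wcone a' b' v" "0 \<le> a" "a \<le> a'" "a' \<le> pi/2" "0 \<le> b'" "b' \<le> b" "b \<le> pi/2"
  shows "wcone a b v"
proof -
  have "cos a' * snd v - sin a' * fst v \<le> cos a * snd v - sin a * fst v"
    using assms unfolding wcone_def by (intro L_mono) auto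
  moreover have "cos b * snd v - sin b * fst v \<le> cos b' * snd v - sin b' * fst v"
    using assms unfolding wcone_def by (intro L_mono) auto
  ultimately show ?thesis using assms(1) unfolding wcone_def by auto
qed

lemma cone_nz: "wcone a b v \<Longrightarrow> 0 < fst v + snd v"
  unfolding wcone_def by (cases "fst v = 0 \<and> snd v = 0") auto

lemma cone_right: "wcone a b v \<Longrightarrow> cos b * snd v - sin b * fst v < 0"
  unfolding wcone_def by auto

lemma cone_left: assumes "wcone a' b' v" "0 \<le> b" "b \<le> a'" "a' \<le> pi/2"
  shows "0 < cos b * snd v - sin b * fst v"
proof -
  have "cos a' * snd v - sin a' * fst v \<le> cos b * snd v - sin b * fst v"
    using assms unfolding wcone_def by (intro L_mono) auto
  thus ?thesis using assms(1) unfolding wcone_def by auto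
qed




lemma tsize_pos: "0 < tsize t" by (cases t) auto

lemma cs_formula:
  "child_start a1 a2 N ts i = a1 + (a2 - a1) * real (\<Sum>k<i. tsize (ts!k)) / (real N - 1)"
  by (induction i) (auto simp: add_divide_distrib ring_distribs)

lemma tsize_sum: "real (tsize t) - 1 = real (\<Sum>k<length (kids t). tsize (kids t ! k))"
proof (cases t)
  case (Node ts)
  have "sum_list (map tsize ts) = (\<Sum>k<length ts. tsize (ts ! k))"
    by (simp add: sum_list_sum_nth atLeast0LessThan)
  thus ?thesis using Node by simp
qed

lemma ci_eq: "child_interval t a1 a2 i =
   (a1 + (a2 - a1) * real (\<Sum>k<i. tsize (kids t!k)) / (real (tsize t) - 1),
    a1 + (a2 - a1) * real (\<Sum>k<Suc i. tsize (kids t!k)) / (real (tsize t) - 1))"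
  unfolding child_interval_def Let_def cs_formula by (simp add: add_divide_distrib ring_distribs)

lemma S_mono: "(i::nat) \<le> j \<Longrightarrow> (\<Sum>k<i. f k) \<le> (\<Sum>k<j. (f k::nat))"
  by (intro sum_mono2) auto

lemma S_mono_real: "(i::nat) \<le> j \<Longrightarrow> real (\<Sum>k<i. f k) \<le> real (\<Sum>k<j. (f k::nat))"
  using S_mono[of i j f] by (simp only: of_nat_le_iff)

lemma ci_props: assumes "a1 < a2" "i < length (kids t)"
  shows "a1 \<le> fst (child_interval t a1 a2 i)" "fst (child_interval t a1 a2 i) < snd (child_interval t a1 a2 i)"
    "snd (child_interval t a1 a2 i) \<le> a2"
    "snd (child_interval t a1 a2 i) - fst (child_interval t a1 a2 i) =
       (a2 - a1) * real (tsize (kids t ! i)) / (real (tsize t) - 1)"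
proof -
  define S where "S = (\<lambda>j. real (\<Sum>k<j. tsize (kids t!k)))"
  define D where "D = real (tsize t) - 1"
  define m where "m = length (kids t)"
  have D: "D = S m" unfolding D_def S_def m_def by (rule tsize_sum)
  have Sm: "\<And>i j. i \<le> j \<Longrightarrow> S i \<le> S j" unfolding S_def by (rule S_mono_real)
  have Ss: "S (Suc i) = S i + real (tsize (kids t ! i))" unfolding S_def by simp
  have sp: "0 < real (tsize (kids t ! i))" using tsize_pos by simp
  have S0: "0 \<le> S i" unfolding S_def by (simp only: of_nat_0_le_iff)
  have "S (Suc i) \<le> S m" using assms by (intro Sm) (simp add: m_def)
  hence Dp: "0 < D" using D Ss sp S0 by linarith
  have w: "0 < a2 - a1" using assms by simp
  have e: "child_interval t a1 a2 i = (a1 + (a2 - a1) * S i / D, a1 + (a2 - a1) * S (Suc i) / D)"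
    unfolding ci_eq S_def D_def by simp
  have f1: "0 \<le> (a2 - a1) * S i / D" using w S0 Dp by simp
  have f2: "(a2 - a1) * S i / D < (a2 - a1) * S (Suc i) / D" using w Dp Ss sp
    by (simp add: divide_strict_right_mono)
  have f3: "(a2 - a1) * S (Suc i) / D \<le> (a2 - a1)"
  proof -
    have "(a2 - a1) * S (Suc i) \<le> (a2 - a1) * D" using D \<open>S (Suc i) \<le> S m\<close> w by simp
    thus ?thesis using Dp by (simp add: divide_le_eq)
  qed
  show "a1 \<le> fst (child_interval t a1 a2 i)" using e f1 by simp
  show "fst (child_interval t a1 a2 i) < snd (child_interval t a1 a2 i)" using e f2 by simp
  show "snd (child_interval t a1 a2 i) \<le> a2" using e f3 by simp
  show "snd (child_interval t a1 a2 i) - fst (child_interval t a1 a2 i) =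
       (a2 - a1) * real (tsize (kids t ! i)) / (real (tsize t) - 1)"
    using e Ss by (simp add: D_def[symmetric] diff_divide_distrib[symmetric] ring_distribs)
qed

lemma ci_sib: assumes "a1 < a2" "i < j"
  shows "snd (child_interval t a1 a2 i) \<le> fst (child_interval t a1 a2 j)"
proof -
  define S where "S = (\<lambda>j. real (\<Sum>k<j. tsize (kids t!k)))"
  define D where "D = real (tsize t) - 1"
  have D: "0 \<le> D" unfolding D_def using tsize_pos[of t] by simp
  have "S (Suc i) \<le> S j" unfolding S_def using assms by (intro S_mono_real) simp
  hence "(a2 - a1) * S (Suc i) / D \<le> (a2 - a1) * S j / D" using assms D
    by (intro divide_right_mono mult_left_mono) auto
  thus ?thesis unfolding ci_eq S_def D_def by simp
qed




lemma subtree_append: "subtree t (p @ q) = subtree (subtree t p) q"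
  by (induction p arbitrary: t) auto

lemma valid_append: "valid_pos t (p @ q) \<longleftrightarrow> valid_pos t p \<and> valid_pos (subtree t p) q"
  by (induction p arbitrary: t) auto

lemma angles_append: "angles t a1 a2 (p @ q) =
   angles (subtree t p) (fst (angles t a1 a2 p)) (snd (angles t a1 a2 p)) q"
  by (induction p arbitrary: t a1 a2) (auto split: prod.splits)

lemma place_append: "place t a1 a2 (p @ q) =
   (fst (place t a1 a2 p) + fst (place (subtree t p) (fst (angles t a1 a2 p)) (snd (angles t a1 a2 p)) q),
    snd (place t a1 a2 p) + snd (place (subtree t p) (fst (angles t a1 a2 p)) (snd (angles t a1 a2 p)) q))"
  by (induction p arbitrary: t a1 a2) (auto split: prod.splits simp: Let_def)




lemma angles_ok: assumes "0 \<le> a1" "a1 < a2" "a2 \<le> pi/2" "valid_pos t p"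
  shows "a1 \<le> fst (angles t a1 a2 p) \<and> fst (angles t a1 a2 p) < snd (angles t a1 a2 p) \<and> snd (angles t a1 a2 p) \<le> a2"
  using assms
proof (induction p arbitrary: t a1 a2)
  case Nil thus ?case by simp
next
  case (Cons i p)
  obtain b1 b2 where e: "child_interval t a1 a2 i = (b1, b2)" by force
  have i: "i < length (kids t)" "valid_pos (kids t ! i) p" using Cons.prems(4) by auto
  have b: "a1 \<le> b1" "b1 < b2" "b2 \<le> a2" using ci_props[OF Cons.prems(2) i(1)] e by auto
  have b': "0 \<le> b1" "b2 \<le> pi/2" using b Cons.prems by linarith+
  have h: "b1 \<le> fst (angles (kids t ! i) b1 b2 p) \<and> fst (angles (kids t ! i) b1 b2 p) < snd (angles (kids t ! i) b1 b2 p) \<and> snd (angles (kids t ! i) b1 b2 p) \<le> b2"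
    by (rule Cons.IH[OF b'(1) b(2) b'(2) i(2)])
  have eq: "angles t a1 a2 (i # p) = angles (kids t ! i) b1 b2 p" using e by simp
  from h have h1: "b1 \<le> fst (angles (kids t ! i) b1 b2 p)" and h2: "fst (angles (kids t ! i) b1 b2 p) < snd (angles (kids t ! i) b1 b2 p)"
    and h3: "snd (angles (kids t ! i) b1 b2 p) \<le> b2" by auto
  show ?case unfolding eq using h1 h2 h3 b by (intro conjI) linarith+
qed

lemma place_cone: assumes "0 \<le> a1" "a1 < a2" "a2 \<le> pi/2" "valid_pos t (i # p)"
  shows "wcone (fst (child_interval t a1 a2 i)) (snd (child_interval t a1 a2 i)) (rp (place t a1 a2 (i # p)))"
  using assms
proof (induction p arbitrary: t a1 a2 i)
  case Nil
  obtain b1 b2 where e: "child_interval t a1 a2 i = (b1, b2)" by force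
  have i: "i < length (kids t)" using Nil.prems(4) by simp
  have b: "a1 \<le> b1" "b1 < b2" "b2 \<le> a2" using ci_props[OF Nil.prems(2) i(1)] e by auto
  have b': "0 \<le> b1" "b2 \<le> pi/2" using b Nil.prems by linarith+
  have "place t a1 a2 [i] = P1 b1 b2" using e by (simp add: Let_def)
  thus ?case using P1_cone[OF b'(1) b(2) b'(2)] e by simp
next
  case (Cons j p)
  obtain b1 b2 where e: "child_interval t a1 a2 i = (b1, b2)" by force
  have i: "i < length (kids t)" "valid_pos (kids t ! i) (j # p)" using Cons.prems(4) by auto
  have b: "a1 \<le> b1" "b1 < b2" "b2 \<le> a2" using ci_props[OF Cons.prems(2) i(1)] e by auto
  have b': "0 \<le> b1" "b2 \<le> pi/2" using b Cons.prems by linarith+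
  have c1: "wcone b1 b2 (rp (P1 b1 b2))" by (rule P1_cone[OF b'(1) b(2) b'(2)])
  have IH: "wcone (fst (child_interval (kids t ! i) b1 b2 j)) (snd (child_interval (kids t ! i) b1 b2 j))
      (rp (place (kids t ! i) b1 b2 (j # p)))"
    by (rule Cons.IH[OF b'(1) b(2) b'(2) i(2)])
  have j: "j < length (kids (kids t ! i))" using i(2) by simp
  note cj = ci_props[OF b(2) j]
  have c2: "wcone b1 b2 (rp (place (kids t ! i) b1 b2 (j # p)))"
    by (rule cone_mono[OF IH]) (use cj b' in linarith)+
  have "place t a1 a2 (i # j # p) = (fst (P1 b1 b2) + fst (place (kids t ! i) b1 b2 (j # p)),
          snd (P1 b1 b2) + snd (place (kids t ! i) b1 b2 (j # p)))"
    using e by (simp add: Let_def)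
  hence "rp (place t a1 a2 (i # j # p)) = rp (P1 b1 b2) + rp (place (kids t ! i) b1 b2 (j # p))"
    by (simp add: rp_def)
  thus ?case using cone_add[OF c1 c2] e by simp
qed

lemma place_cone': assumes "0 \<le> a1" "a1 < a2" "a2 \<le> pi/2" "valid_pos t p" "p \<noteq> []"
  shows "wcone a1 a2 (rp (place t a1 a2 p))"
proof -
  obtain i q where p: "p = i # q" using assms(5) by (cases p) auto
  have i: "i < length (kids t)" using assms(4) p by simp
  note c = ci_props[OF assms(2) i]
  show ?thesis unfolding p
    by (rule cone_mono[OF place_cone[OF assms(1-3) assms(4)[unfolded p]]]) (use c assms in linarith)+
qed




lemma kid_le: "i < length (kids t) \<Longrightarrow> real (tsize (kids t ! i)) \<le> real (tsize t) - 1"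
proof -
  assume i: "i < length (kids t)"
  have "tsize (kids t ! i) \<le> (\<Sum>k<length (kids t). tsize (kids t ! k))"
    using i by (intro member_le_sum) auto
  thus ?thesis using tsize_sum[of t] by linarith
qed

lemma grid_rel: assumes "0 \<le> a1" "a1 < a2" "a2 \<le> pi/2" "valid_pos t p"
  shows "0 \<le> fst (place t a1 a2 p) \<and> real_of_int (fst (place t a1 a2 p)) \<le> (real (tsize t) - 1) * (pi/2) / (a2 - a1) \<and>
         0 \<le> snd (place t a1 a2 p) \<and> real_of_int (snd (place t a1 a2 p)) \<le> (real (tsize t) - 1) * (pi/2) / (a2 - a1)"
  using assms
proof (induction p arbitrary: t a1 a2)
  case Nil
  have "0 \<le> (real (tsize t) - 1)" using tsize_pos[of t] by simp
  hence "0 \<le> (real (tsize t) - 1) * (pi/2) / (a2 - a1)" using Nil.prems by simp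
  thus ?case by simp
next
  case (Cons i p)
  obtain b1 b2 where e: "child_interval t a1 a2 i = (b1, b2)" by force
  have i: "i < length (kids t)" "valid_pos (kids t ! i) p" using Cons.prems(4) by auto
  note cp = ci_props[OF Cons.prems(2) i(1)]
  have b: "a1 \<le> b1" "b1 < b2" "b2 \<le> a2" using cp e by auto
  have b': "0 \<le> b1" "b2 \<le> pi/2" using b Cons.prems by linarith+
  define s where "s = real (tsize (kids t ! i))"
  define D where "D = real (tsize t) - 1"
  have s1: "1 \<le> s" using tsize_pos[of "kids t ! i"] unfolding s_def by linarith
  have sD: "s \<le> D" using kid_le[OF i(1)] unfolding s_def D_def .
  have wc: "b2 - b1 = (a2 - a1) * s / D" using cp(4) e unfolding s_def D_def by simp
  have key: "(pi/2) / (b2 - b1) + (s - 1) * (pi/2) / (b2 - b1) = D * (pi/2) / (a2 - a1)"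
  proof -
    have "(pi/2) / (b2 - b1) + (s - 1) * (pi/2) / (b2 - b1) = s * (pi/2) / (b2 - b1)"
      by (simp add: add_divide_distrib[symmetric] algebra_simps)
    also have "\<dots> = D * (pi/2) / (a2 - a1)" unfolding wc using s1 sD Cons.prems(2) by (simp add: field_simps)
    finally show ?thesis .
  qed
  have g: "goodpt b1 b2 (P1 b1 b2)" by (rule P1_good[OF b'(1) b(2) b'(2)])
  have IH: "0 \<le> fst (place (kids t ! i) b1 b2 p) \<and> real_of_int (fst (place (kids t ! i) b1 b2 p)) \<le> (s - 1) * (pi/2) / (b2 - b1) \<and>
         0 \<le> snd (place (kids t ! i) b1 b2 p) \<and> real_of_int (snd (place (kids t ! i) b1 b2 p)) \<le> (s - 1) * (pi/2) / (b2 - b1)"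
    unfolding s_def by (rule Cons.IH[OF b'(1) b(2) b'(2) i(2)])
  have eq: "place t a1 a2 (i # p) = (fst (P1 b1 b2) + fst (place (kids t ! i) b1 b2 p),
          snd (P1 b1 b2) + snd (place (kids t ! i) b1 b2 p))"
    using e by (simp add: Let_def)
  show ?case unfolding eq D_def[symmetric] using IH g key unfolding goodpt_def
    by (simp only: fst_conv snd_conv of_int_add) linarith
qed

lemma verts_Node: "verts (Node ts) = insert [] (\<Union>i\<in>{..<length ts}. (\<lambda>q. i # q) ` verts (ts ! i))"
proof -
  have "p \<in> verts (Node ts) \<longleftrightarrow> p \<in> insert [] (\<Union>i\<in>{..<length ts}. (\<lambda>q. i # q) ` verts (ts ! i))" for p
    by (cases p) (auto simp: verts_def)
  thus ?thesis by blast
qed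

lemma card_verts: "finite (verts t) \<and> card (verts t) = tsize t"
proof (induction t)
  case (Node ts)
  have fin: "finite (verts (ts ! i))" and c: "card (verts (ts ! i)) = tsize (ts ! i)" if "i < length ts" for i
    using Node that by auto
  have fU: "finite (\<Union>i\<in>{..<length ts}. (\<lambda>q. i # q) ` verts (ts ! i))" using fin by auto
  have nU: "[] \<notin> (\<Union>i\<in>{..<length ts}. (\<lambda>q. i # q) ` verts (ts ! i))" by auto
  have "card (\<Union>i\<in>{..<length ts}. (\<lambda>q. i # q) ` verts (ts ! i)) = (\<Sum>i<length ts. card ((\<lambda>q. i # q) ` verts (ts ! i)))"
    by (rule card_UN_disjoint) (use fin in auto)
  also have "\<dots> = (\<Sum>i<length ts. tsize (ts ! i))"
    by (rule sum.cong) (auto simp: card_image c)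
  also have "\<dots> = sum_list (map tsize ts)" by (simp add: sum_list_sum_nth atLeast0LessThan)
  finally show ?case unfolding verts_Node using fU nU by simp
qed

lemma grid: assumes "p \<in> verts T"
  shows "fst (alg1 T p) \<in> {0 .. int (card (verts T)) - 1} \<and> snd (alg1 T p) \<in> {0 .. int (card (verts T)) - 1}"
proof -
  have v: "valid_pos T p" using assms by (simp add: verts_def)
  have h: "0 \<le> fst (place T 0 (pi/2) p) \<and> real_of_int (fst (place T 0 (pi/2) p)) \<le> (real (tsize T) - 1) * (pi/2) / (pi/2 - 0) \<and>
         0 \<le> snd (place T 0 (pi/2) p) \<and> real_of_int (snd (place T 0 (pi/2) p)) \<le> (real (tsize T) - 1) * (pi/2) / (pi/2 - 0)"
    by (rule grid_rel) (use v in auto)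
  have "(real (tsize T) - 1) * (pi/2) / (pi/2 - 0) = real_of_int (int (tsize T) - 1)" by simp
  hence "fst (place T 0 (pi/2) p) \<le> int (tsize T) - 1" "snd (place T 0 (pi/2) p) \<le> int (tsize T) - 1"
    using h by linarith+
  thus ?thesis using h card_verts[of T] unfolding alg1_def by simp
qed




definition crs :: "real \<times> real \<Rightarrow> real \<times> real \<Rightarrow> real" where
  "crs a b = fst a * snd b - snd a * fst b"

lemma ratio_mono:
  assumes "0 < dotp a b1" "0 < dotp a b2" "0 < crs b1 b2" "a \<noteq> (0,0)"
  shows "crs a b1 / dotp a b1 < crs a b2 / dotp a b2"
proof -
  have id: "crs a b2 * dotp a b1 - crs a b1 * dotp a b2 = ((fst a)\<^sup>2 + (snd a)\<^sup>2) * crs b1 b2"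
    unfolding crs_def dotp_def by (simp add: power2_eq_square algebra_simps)
  have "0 < (fst a)\<^sup>2 + (snd a)\<^sup>2" using assms(4)
    by (metis prod.collapse sum_power2_gt_zero_iff)
  hence "crs a b1 * dotp a b2 < crs a b2 * dotp a b1" using id assms(3)
    by (smt (verit) mult_pos_pos)
  thus ?thesis using assms(1,2) by (simp add: divide_less_eq less_divide_eq field_simps)
qed

lemma arg_div: assumes "0 < dotp a b" "a \<noteq> (0,0)"
  shows "Arg (Complex (fst b) (snd b) / Complex (fst a) (snd a)) = arctan (crs a b / dotp a b)"
proof -
  define z where "z = Complex (fst b) (snd b) / Complex (fst a) (snd a)"
  define N where "N = (fst a)\<^sup>2 + (snd a)\<^sup>2"
  have N: "0 < N" using assms(2) unfolding N_def by (metis prod.collapse sum_power2_gt_zero_iff)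
  have re: "Re z = dotp a b / N" unfolding z_def N_def dotp_def Re_divide by (simp add: algebra_simps)
  have im: "Im z = crs a b / N" unfolding z_def N_def crs_def Im_divide by (simp add: algebra_simps)
  have "0 < Re z" using re N assms(1) by simp
  hence "Arg z = arctan (Im z / Re z)" by (rule arg_conv_arctan)
  also have "Im z / Re z = crs a b / dotp a b" using re im N by simp
  finally show ?thesis unfolding z_def .
qed

lemma ccw_root: assumes "0 < dotp a b" "0 < crs a b" "a \<noteq> (0,0)"
  shows "ccw_angle a b = arctan (crs a b / dotp a b)"
proof -
  have "0 < crs a b / dotp a b" using assms by simp
  thus ?thesis using arg_div[OF assms(1,3)] unfolding ccw_angle_def Let_def by simp
qed

lemma ccw_nonroot: assumes "0 < dotp a b" "a \<noteq> (0,0)"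
  shows "ccw_angle (- a) b = arctan (crs a b / dotp a b) + pi"
proof -
  define z where "z = Complex (fst b) (snd b) / Complex (fst a) (snd a)"
  define N where "N = (fst a)\<^sup>2 + (snd a)\<^sup>2"
  have N: "0 < N" using assms(2) unfolding N_def by (metis prod.collapse sum_power2_gt_zero_iff)
  have re: "Re z = dotp a b / N" unfolding z_def N_def dotp_def Re_divide by (simp add: algebra_simps)
  hence nz: "z \<noteq> 0" using N assms(1) by auto
  have az: "Arg z = arctan (crs a b / dotp a b)" unfolding z_def by (rule arg_div[OF assms])
  have b: "- (pi/2) < Arg z" "Arg z < pi/2" using az arctan_bounded by auto
  have e: "Complex (fst b) (snd b) / Complex (fst (- a)) (snd (- a)) = - z"
  proof -
    have "Complex (fst (- a)) (snd (- a)) = - Complex (fst a) (snd a)" by (simp add: complex_eq_iff)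
    thus ?thesis unfolding z_def by simp
  qed
  have "Arg (- z) = (if Arg z \<le> 0 then Arg z + pi else Arg z - pi)" by (rule Arg_minus[OF nz])
  hence "(let t = Arg (- z) in if t \<le> 0 then t + 2 * pi else t) = Arg z + pi"
    using b pi_gt_zero by (auto simp: Let_def)
  thus ?thesis unfolding ccw_angle_def e az .
qed

lemma cross_pos:
  assumes "wcone a1 b1 u" "wcone a2 b2 v" "b1 \<le> a2" "0 \<le> b1" "a2 \<le> pi/2"
    "0 < fst u" "0 < snd u" "0 < fst v" "0 < snd v"
  shows "0 < crs u v"
proof -
  have r: "cos b1 * snd u - sin b1 * fst u < 0" by (rule cone_right[OF assms(1)])
  have l: "0 < cos b1 * snd v - sin b1 * fst v" by (rule cone_left[OF assms(2,4,3,5)])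
  have sb: "0 < sin b1"
  proof (rule ccontr)
    assume "\<not> 0 < sin b1"
    moreover have "0 \<le> sin b1" using assms by (intro sin_ge_zero) auto
    ultimately have "sin b1 = 0" by simp
    moreover have "0 \<le> cos b1" using assms by (intro cos_ge_zero) auto
    ultimately have "0 \<le> cos b1 * snd u - sin b1 * fst u" using assms(7) by simp
    thus False using r by simp
  qed
  have cb: "0 < cos b1"
  proof (rule ccontr)
    assume "\<not> 0 < cos b1"
    moreover have "0 \<le> cos b1" using assms by (intro cos_ge_zero) auto
    ultimately have "cos b1 = 0" by simp
    hence "cos b1 * snd v - sin b1 * fst v < 0" using sb assms(8) by simp
    thus False using l by simp
  qed
  have "snd u / fst u < sin b1 / cos b1" using r sb cb assms(6)
    by (simp add: divide_less_eq less_divide_eq field_simps)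
  moreover have "sin b1 / cos b1 < snd v / fst v" using l sb cb assms(8)
    by (simp add: divide_less_eq less_divide_eq field_simps)
  ultimately have "snd u / fst u < snd v / fst v" by linarith
  thus ?thesis using assms(6,8) unfolding crs_def by (simp add: divide_less_eq less_divide_eq field_simps)
qed




definition AA :: "otree \<Rightarrow> nat list \<Rightarrow> real \<times> real" where "AA T p = angles T 0 (pi/2) p"
definition EE :: "otree \<Rightarrow> nat list \<Rightarrow> real \<times> real" where "EE T p = rp (P1 (fst (AA T p)) (snd (AA T p)))"
definition PP :: "otree \<Rightarrow> nat list \<Rightarrow> real \<times> real" where "PP T p = pt (alg1 T) p"
definition KK :: "otree \<Rightarrow> nat list \<Rightarrow> real \<times> real \<Rightarrow> bool" where "KK T p = wcone (fst (AA T p)) (snd (AA T p))"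

lemma AA_ok: "valid_pos T p \<Longrightarrow> 0 \<le> fst (AA T p) \<and> fst (AA T p) < snd (AA T p) \<and> snd (AA T p) \<le> pi/2"
  unfolding AA_def using angles_ok[of 0 "pi/2" T p] by simp

lemma AA_child: "AA T (p @ [i]) = child_interval (subtree T p) (fst (AA T p)) (snd (AA T p)) i"
  unfolding AA_def angles_append by (simp split: prod.splits)

lemma AA_nest: assumes "valid_pos T (p @ q)"
  shows "fst (AA T p) \<le> fst (AA T (p @ q)) \<and> snd (AA T (p @ q)) \<le> snd (AA T p)"
proof -
  have v: "valid_pos T p" "valid_pos (subtree T p) q" using assms valid_append by auto
  have h: "0 \<le> fst (AA T p)" "fst (AA T p) < snd (AA T p)" "snd (AA T p) \<le> pi/2" using AA_ok[OF v(1)] by auto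
  show ?thesis using angles_ok[OF h v(2)] unfolding AA_def angles_append by auto
qed

lemma edge_pos: assumes "valid_pos T (p @ [i])" shows "PP T (p @ [i]) = PP T p + EE T (p @ [i])"
proof -
  have "place (subtree T p) (fst (AA T p)) (snd (AA T p)) [i] = P1 (fst (AA T (p @ [i]))) (snd (AA T (p @ [i])))"
    unfolding AA_child by (simp split: prod.splits add: Let_def)
  thus ?thesis unfolding PP_def EE_def alg1_def pt_def rp_def place_append AA_def by simp
qed

lemma EE_cone: assumes "valid_pos T p" shows "KK T p (EE T p)" "1 \<le> fst (EE T p)" "1 \<le> snd (EE T p)"
proof -
  have h: "0 \<le> fst (AA T p)" "fst (AA T p) < snd (AA T p)" "snd (AA T p) \<le> pi/2" using AA_ok[OF assms] by auto
  show "KK T p (EE T p)" unfolding KK_def EE_def by (rule P1_cone[OF h])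
  show "1 \<le> fst (EE T p)" "1 \<le> snd (EE T p)" using P1_pos[OF h] unfolding EE_def rp_def by auto
qed

lemma KK_mono: assumes "valid_pos T (p @ q)" "KK T (p @ q) v" shows "KK T p v"
proof -
  have v: "valid_pos T p" using assms valid_append by auto
  note a = AA_ok[OF v] AA_ok[OF assms(1)] AA_nest[OF assms(1)]
  show ?thesis using assms(2) unfolding KK_def by (rule cone_mono) (use a in linarith)+
qed

lemma EE_nest: assumes "valid_pos T (p @ q)" shows "KK T p (EE T (p @ q))"
  using KK_mono[OF assms EE_cone(1)[OF assms]] .

lemma desc_cone: assumes "valid_pos T (p @ i # q)" shows "KK T (p @ [i]) (PP T (p @ i # q) - PP T p)"
proof -
  have v: "valid_pos T p" "valid_pos (subtree T p) (i # q)" using assms valid_append by auto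
  have h: "0 \<le> fst (AA T p)" "fst (AA T p) < snd (AA T p)" "snd (AA T p) \<le> pi/2" using AA_ok[OF v(1)] by auto
  have "PP T (p @ i # q) - PP T p = rp (place (subtree T p) (fst (AA T p)) (snd (AA T p)) (i # q))"
    unfolding PP_def alg1_def pt_def rp_def place_append AA_def by simp
  thus ?thesis using place_cone[OF h v(2)] unfolding KK_def AA_child by simp
qed

lemma sib: assumes "valid_pos T (p @ [j])" "i < j" shows "snd (AA T (p @ [i])) \<le> fst (AA T (p @ [j]))"
proof -
  have v: "valid_pos T p" using assms valid_append by auto
  have "fst (AA T p) < snd (AA T p)" using AA_ok[OF v] by auto
  thus ?thesis unfolding AA_child by (rule ci_sib[OF _ assms(2)])
qed

lemma sep: assumes "valid_pos T (w @ [i])" "valid_pos T (w @ [j])" "i < j" "KK T (w @ [i]) x" "KK T (w @ [j]) y"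
  shows "x \<noteq> y"
proof -
  let ?b = "snd (AA T (w @ [i]))"
  have r: "cos ?b * snd x - sin ?b * fst x < 0" using assms(4) unfolding KK_def by (rule cone_right)
  have l: "0 < cos ?b * snd y - sin ?b * fst y"
    using assms(5) unfolding KK_def
    by (rule cone_left) (use sib[OF assms(2,3)] AA_ok[OF assms(1)] AA_ok[OF assms(2)] in linarith)+
  show ?thesis using r l by auto
qed

lemma sep': assumes "valid_pos T (w @ [i])" "valid_pos T (w @ [j])" "i \<noteq> j" "KK T (w @ [i]) x" "KK T (w @ [j]) y"
  shows "x \<noteq> y"
  using sep[OF assms(1,2) _ assms(4,5)] sep[OF assms(2,1) _ assms(5,4)] assms(3) by (cases "i < j") auto

lemma KK_nz: "KK T p v \<Longrightarrow> v \<noteq> 0"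
  unfolding KK_def using cone_nz by fastforce

lemma KK_sum: "KK T p v \<Longrightarrow> 0 < fst v + snd v"
  unfolding KK_def using cone_nz by fastforce

lemma split3: "(\<exists>r. v = u @ r) \<or> (\<exists>r. u = v @ r) \<or> (\<exists>w i j r s. i \<noteq> j \<and> u = w @ i # r \<and> v = w @ j # s)"
proof (induction u arbitrary: v)
  case Nil thus ?case by auto
next
  case (Cons a u)
  show ?case
  proof (cases v)
    case Nil thus ?thesis by auto
  next
    case (Cons b v')
    show ?thesis
    proof (cases "a = b")
      case True
      from Cons.IH[of v'] show ?thesis
      proof (elim disjE exE conjE)
        fix r assume "v' = u @ r" thus ?thesis using Cons True by auto
      next
        fix r assume "u = v' @ r" thus ?thesis using Cons True by auto
      next
        fix w i j r s assume "i \<noteq> j" "u = w @ i # r" "v' = w @ j # s"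
        thus ?thesis using Cons True by (intro disjI2) (metis append_Cons)
      qed
    next
      case False
      thus ?thesis using Cons by (intro disjI2) (metis append_Nil)
    qed
  qed
qed




lemma KK_add: "KK T p u \<Longrightarrow> KK T p v \<Longrightarrow> KK T p (u + v)"
  unfolding KK_def by (rule cone_add)

lemma KK_scale: "0 < t \<Longrightarrow> KK T p u \<Longrightarrow> KK T p (t *\<^sub>R u)"
  unfolding KK_def by (rule cone_scale)

lemma seg_param: assumes "valid_pos T (a @ [i])" "z \<in> closed_segment (PP T a) (PP T (a @ [i]))"
  shows "\<exists>u. 0 \<le> u \<and> u \<le> 1 \<and> z = PP T a + u *\<^sub>R EE T (a @ [i])"
proof -
  obtain u where u: "0 \<le> u" "u \<le> 1" "z = (1 - u) *\<^sub>R PP T a + u *\<^sub>R PP T (a @ [i])"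
    using assms(2) unfolding in_segment by blast
  have "z = PP T a + u *\<^sub>R EE T (a @ [i])" unfolding u(3) edge_pos[OF assms(1)]
    by (simp add: algebra_simps)
  thus ?thesis using u by blast
qed

lemma app_split: "a @ [i] = w @ k # r \<Longrightarrow> (a = w \<and> k = i) \<or> (\<exists>r'. a = w @ k # r')"
  by (cases r rule: rev_cases) auto

lemma edge_region: assumes "valid_pos T (a @ [i])" "z \<in> closed_segment (PP T a) (PP T (a @ [i]))"
  "a @ [i] = w @ k # r"
  shows "(a = w \<and> z = PP T w) \<or> KK T (w @ [k]) (z - PP T w)"
proof -
  obtain u where u: "0 \<le> u" "u \<le> 1" "z = PP T a + u *\<^sub>R EE T (a @ [i])"
    using seg_param[OF assms(1,2)] by blast
  have vk: "valid_pos T ((w @ [k]) @ r)" using assms(1) unfolding assms(3) by simp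
  have E: "KK T (w @ [k]) (EE T (a @ [i]))" using EE_nest[OF vk] unfolding assms(3) by simp
  show ?thesis
  proof (cases "u = 0")
    case True
    hence z: "z = PP T a" using u by simp
    from app_split[OF assms(3)] show ?thesis
    proof
      assume "a = w \<and> k = i" thus ?thesis using z by simp
    next
      assume "\<exists>r'. a = w @ k # r'"
      then obtain r' where a: "a = w @ k # r'" by blast
      have "valid_pos T (w @ k # r')" using assms(1) a valid_append by auto
      thus ?thesis using desc_cone[of T w k r'] z a by simp
    qed
  next
    case False
    hence uE: "KK T (w @ [k]) (u *\<^sub>R EE T (a @ [i]))" using u E by (intro KK_scale) auto
    from app_split[OF assms(3)] show ?thesis
    proof
      assume "a = w \<and> k = i" thus ?thesis using uE u by simp
    next
      assume "\<exists>r'. a = w @ k # r'"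
      then obtain r' where a: "a = w @ k # r'" by blast
      have "valid_pos T (w @ k # r')" using assms(1) a valid_append by auto
      hence "KK T (w @ [k]) (PP T a - PP T w)" using desc_cone[of T w k r'] a by simp
      from KK_add[OF this uE] show ?thesis using u by (simp add: algebra_simps)
    qed
  qed
qed

lemma edge_up: assumes "valid_pos T (a @ [i])" "z \<in> closed_segment (PP T a) (PP T (a @ [i]))"
  shows "fst (z - PP T (a @ [i])) + snd (z - PP T (a @ [i])) \<le> 0"
    "fst (z - PP T (a @ [i])) + snd (z - PP T (a @ [i])) = 0 \<Longrightarrow> z = PP T (a @ [i])"
proof -
  obtain u where u: "0 \<le> u" "u \<le> 1" "z = PP T a + u *\<^sub>R EE T (a @ [i])"
    using seg_param[OF assms(1,2)] by blast
  have e: "z - PP T (a @ [i]) = (u - 1) *\<^sub>R EE T (a @ [i])" unfolding u(3) edge_pos[OF assms(1)]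
    by (simp add: algebra_simps)
  have E: "1 \<le> fst (EE T (a @ [i]))" "1 \<le> snd (EE T (a @ [i]))" using EE_cone[OF assms(1)] by auto
  have s: "fst (z - PP T (a @ [i])) + snd (z - PP T (a @ [i])) = (u - 1) * (fst (EE T (a @ [i])) + snd (EE T (a @ [i])))"
    unfolding e by (simp add: algebra_simps)
  show "fst (z - PP T (a @ [i])) + snd (z - PP T (a @ [i])) \<le> 0" unfolding s using u E
    by (intro mult_nonpos_nonneg) auto
  assume "fst (z - PP T (a @ [i])) + snd (z - PP T (a @ [i])) = 0"
  hence "u = 1" using s E by simp
  thus "z = PP T (a @ [i])" using e by simp
qed

lemma tree_edgeE: "tree_edge T a b \<Longrightarrow> \<exists>i. b = a @ [i] \<and> valid_pos T (a @ [i])"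
  unfolding tree_edge_def verts_def by auto

lemma plan_prefix:
  assumes "valid_pos T (a @ [i])" "valid_pos T (c @ [j])" "c @ [j] = (a @ [i]) @ r" "r \<noteq> []"
    "z \<in> closed_segment (PP T a) (PP T (a @ [i]))" "z \<in> closed_segment (PP T c) (PP T (c @ [j]))"
  shows "z \<in> PP T ` ({a, a @ [i]} \<inter> {c, c @ [j]})"
proof -
  obtain k r' where r: "r = k # r'" using assms(4) by (cases r) auto
  have "(c = a @ [i] \<and> z = PP T (a @ [i])) \<or> KK T ((a @ [i]) @ [k]) (z - PP T (a @ [i]))"
    by (rule edge_region[OF assms(2) assms(6)]) (use assms(3) r in simp)
  thus ?thesis
  proof
    assume "KK T ((a @ [i]) @ [k]) (z - PP T (a @ [i]))"
    from KK_sum[OF this] edge_up(1)[OF assms(1,5)] show ?thesis by simp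
  next
    assume "c = a @ [i] \<and> z = PP T (a @ [i])" thus ?thesis by auto
  qed
qed

lemma plan_inc:
  assumes "valid_pos T (a @ [i])" "valid_pos T (c @ [j])" "a @ [i] = w @ k # r1" "c @ [j] = w @ l # r2" "k \<noteq> l"
    "z \<in> closed_segment (PP T a) (PP T (a @ [i]))" "z \<in> closed_segment (PP T c) (PP T (c @ [j]))"
  shows "z \<in> PP T ` ({a, a @ [i]} \<inter> {c, c @ [j]})"
proof -
  have vk: "valid_pos T (w @ [k])" using assms(1) unfolding assms(3) using valid_append[of T "w @ [k]" r1] by simp
  have vl: "valid_pos T (w @ [l])" using assms(2) unfolding assms(4) using valid_append[of T "w @ [l]" r2] by simp
  have A: "(a = w \<and> z = PP T w) \<or> KK T (w @ [k]) (z - PP T w)" by (rule edge_region[OF assms(1,6,3)])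
  have C: "(c = w \<and> z = PP T w) \<or> KK T (w @ [l]) (z - PP T w)" by (rule edge_region[OF assms(2,7,4)])
  show ?thesis
  proof (cases "KK T (w @ [k]) (z - PP T w)")
    case True
    show ?thesis
    proof (cases "KK T (w @ [l]) (z - PP T w)")
      case True2: True
      have "z - PP T w \<noteq> z - PP T w" by (rule sep'[OF vk vl assms(5) True True2])
      thus ?thesis by simp
    next
      case False
      hence "z = PP T w" using C by auto
      thus ?thesis using KK_nz[OF True] by simp
    qed
  next
    case False
    hence a: "a = w" "z = PP T w" using A by auto
    show ?thesis
    proof (cases "KK T (w @ [l]) (z - PP T w)")
      case True
      thus ?thesis using KK_nz[OF True] a by simp
    next
      case False
      hence "c = w" using C by auto
      thus ?thesis using a by auto
    qed
  qed
qed

lemma PP_inj: assumes "valid_pos T u" "valid_pos T v" "PP T u = PP T v" shows "u = v"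
proof -
  have pre: False if "valid_pos T (x @ k # r)" "PP T (x @ k # r) = PP T x" for x k r
    using KK_nz[OF desc_cone[OF that(1)]] that(2) by simp
  from split3[of v u] show ?thesis
  proof (elim disjE exE conjE)
    fix r assume r: "v = u @ r"
    show ?thesis
    proof (cases r)
      case Nil thus ?thesis using r by simp
    next
      case (Cons k r') thus ?thesis using pre[of u k r'] r assms by simp
    qed
  next
    fix r assume r: "u = v @ r"
    show ?thesis
    proof (cases r)
      case Nil thus ?thesis using r by simp
    next
      case (Cons k r') thus ?thesis using pre[of v k r'] r assms by simp
    qed
  next
    fix w i j r s assume h: "i \<noteq> j" "u = w @ i # r" "v = w @ j # s"
    have vk: "valid_pos T (w @ [i])" using assms(1) h valid_append[of T "w @ [i]" r] by simp
    have vl: "valid_pos T (w @ [j])" using assms(2) h valid_append[of T "w @ [j]" s] by simp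
    have "KK T (w @ [i]) (PP T u - PP T w)" using desc_cone assms(1) h by simp
    moreover have "KK T (w @ [j]) (PP T v - PP T w)" using desc_cone assms(2) h by simp
    ultimately have "PP T u - PP T w \<noteq> PP T v - PP T w" by (rule sep'[OF vk vl h(1)])
    thus ?thesis using assms(3) by simp
  qed
qed

lemma planar: "planar_drawing T (alg1 T)"
proof -
  have PPe: "pt (alg1 T) = PP T" unfolding PP_def by auto
  have inj: "inj_on (alg1 T) (verts T)"
  proof (rule inj_onI)
    fix u v assume "u \<in> verts T" "v \<in> verts T" "alg1 T u = alg1 T v"
    thus "u = v" using PP_inj[of T u v] unfolding verts_def PP_def pt_def by auto
  qed
  have seg: "closed_segment (PP T a) (PP T b) \<inter> closed_segment (PP T c) (PP T d) \<subseteq> PP T ` ({a, b} \<inter> {c, d})"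
    if e: "tree_edge T a b" "tree_edge T c d" "(a, b) \<noteq> (c, d)" for a b c d
  proof
    fix z assume z: "z \<in> closed_segment (PP T a) (PP T b) \<inter> closed_segment (PP T c) (PP T d)"
    obtain i where i: "b = a @ [i]" "valid_pos T (a @ [i])" using tree_edgeE[OF e(1)] by blast
    obtain j where j: "d = c @ [j]" "valid_pos T (c @ [j])" using tree_edgeE[OF e(2)] by blast
    have z1: "z \<in> closed_segment (PP T a) (PP T (a @ [i]))" and z2: "z \<in> closed_segment (PP T c) (PP T (c @ [j]))"
      using z i j by auto
    have bd: "b \<noteq> d" using e(3) i j by auto
    from split3[of d b] show "z \<in> PP T ` ({a, b} \<inter> {c, d})"
    proof (elim disjE exE conjE)
      fix r assume r: "d = b @ r"
      hence "r \<noteq> []" using bd by auto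
      thus ?thesis using plan_prefix[OF i(2) j(2) _ _ z1 z2] r i j by simp
    next
      fix r assume r: "b = d @ r"
      hence "r \<noteq> []" using bd by auto
      hence "z \<in> PP T ` ({c, c @ [j]} \<inter> {a, a @ [i]})" using plan_prefix[OF j(2) i(2) _ _ z2 z1] r i j by simp
      thus ?thesis using i j by (simp add: Int_commute)
    next
      fix w k l r s assume h: "k \<noteq> l" "b = w @ k # r" "d = w @ l # s"
      thus ?thesis using plan_inc[OF i(2) j(2) _ _ h(1) z1 z2] i j by simp
    qed
  qed
  show ?thesis unfolding planar_drawing_def PPe using inj seg by blast
qed




fun lchain :: "('a \<Rightarrow> 'a \<Rightarrow> bool) \<Rightarrow> 'a list \<Rightarrow> bool" where
  "lchain R (x # y # zs) = (R x y \<and> lchain R (y # zs))"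
| "lchain R _ = True"

lemma all_Suc_split: "(\<forall>i. Q i) = (Q 0 \<and> (\<forall>i. Q (Suc i)))"
  by (metis not0_implies_Suc)

lemma chain_nth: "lchain R xs \<longleftrightarrow> (\<forall>i. Suc i < length xs \<longrightarrow> R (xs ! i) (xs ! Suc i))"
proof (induction R xs rule: lchain.induct)
  case (1 R x y zs)
  show ?case unfolding lchain.simps 1 by (subst all_Suc_split) simp
qed auto

lemma chain_Cons: "lchain R (x # l) \<longleftrightarrow> (l \<noteq> [] \<longrightarrow> R x (hd l)) \<and> lchain R l"
  by (cases l) auto

lemma chain_append: "lchain R (xs @ ys) \<longleftrightarrow> lchain R xs \<and> lchain R ys \<and> (xs \<noteq> [] \<longrightarrow> ys \<noteq> [] \<longrightarrow> R (last xs) (hd ys))"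
  by (induction xs) (auto simp: chain_Cons)

lemma chain_rev: "lchain R (rev xs) \<longleftrightarrow> lchain (\<lambda>a b. R b a) xs"
  by (induction xs) (auto simp: chain_append chain_Cons last_rev)

lemma chain_map: "lchain R (map f xs) \<longleftrightarrow> lchain (\<lambda>a b. R (f a) (f b)) xs"
  by (induction xs) (auto simp: chain_Cons hd_map)

lemma chain_mono: "lchain R xs \<Longrightarrow> (\<And>a b. R a b \<Longrightarrow> S a b) \<Longrightarrow> lchain S xs"
  by (induction R xs rule: lchain.induct) auto

fun dpath :: "nat list \<Rightarrow> nat list \<Rightarrow> nat list list" where
  "dpath w [] = [w]"
| "dpath w (x # xs) = w # dpath (w @ [x]) xs"

lemma dpath_ne: "dpath w xs \<noteq> []" by (cases xs) auto

lemma dpath_hd: "hd (dpath w xs) = w" by (cases xs) auto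

lemma dpath_last: "last (dpath w xs) = w @ xs"
  by (induction xs arbitrary: w) (auto simp: dpath_ne)

lemma dpath_set: "y \<in> set (dpath w xs) \<Longrightarrow> \<exists>k. y = w @ take k xs"
proof (induction xs arbitrary: w)
  case Nil thus ?case by simp
next
  case (Cons x xs)
  show ?case
  proof (cases "y = w")
    case True thus ?thesis by (intro exI[of _ 0]) simp
  next
    case False
    hence "y \<in> set (dpath (w @ [x]) xs)" using Cons.prems by simp
    then obtain k where "y = (w @ [x]) @ take k xs" using Cons.IH by blast
    thus ?thesis by (intro exI[of _ "Suc k"]) simp
  qed
qed

lemma chain_dpath: "(\<And>k. k < length xs \<Longrightarrow> R (w @ take k xs) ((w @ take k xs) @ [xs ! k])) \<Longrightarrow> lchain R (dpath w xs)"
proof (induction xs arbitrary: w)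
  case Nil thus ?case by simp
next
  case (Cons x xs)
  have h0: "R w (w @ [x])" using Cons.prems[of 0] by simp
  have "lchain R (dpath (w @ [x]) xs)"
  proof (rule Cons.IH)
    fix k assume "k < length xs"
    thus "R ((w @ [x]) @ take k xs) (((w @ [x]) @ take k xs) @ [xs ! k])" using Cons.prems[of "Suc k"] by simp
  qed
  thus ?case using h0 by (simp add: chain_Cons dpath_hd)
qed

lemma valid_take: "valid_pos T (w @ xs) \<Longrightarrow> valid_pos T (w @ take k xs)"
  using valid_append[of T "w @ take k xs" "drop k xs"] by simp

lemma valid_take': "valid_pos T (w @ xs) \<Longrightarrow> k < length xs \<Longrightarrow> valid_pos T ((w @ take k xs) @ [xs ! k])"
  using valid_take[of T w xs "Suc k"] by (simp add: take_Suc_conv_app_nth)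

lemma dotp_add: "dotp d (a + b) = dotp d a + dotp d b"
  unfolding dotp_def by (simp add: algebra_simps)

lemma adj_edge: "valid_pos T (y @ [c]) \<Longrightarrow> adjacent T y (y @ [c])"
  unfolding adjacent_def tree_edge_def verts_def using valid_append[of T y "[c]"] by auto

lemma adj_sym: "adjacent T p q \<Longrightarrow> adjacent T q p"
  unfolding adjacent_def by auto

lemma down_path:
  assumes "valid_pos T (w @ xs)"
    "\<And>k. k < length xs \<Longrightarrow> 0 < dotp d (EE T ((w @ take k xs) @ [xs ! k]))"
  shows "lchain (\<lambda>p q. dotp d (PP T p) < dotp d (PP T q)) (dpath w xs)"
    "lchain (adjacent T) (dpath w xs)"
    "set (dpath w xs) \<subseteq> verts T"
proof -
  show "lchain (\<lambda>p q. dotp d (PP T p) < dotp d (PP T q)) (dpath w xs)"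
  proof (rule chain_dpath)
    fix k assume k: "k < length xs"
    show "dotp d (PP T (w @ take k xs)) < dotp d (PP T ((w @ take k xs) @ [xs ! k]))"
      unfolding edge_pos[OF valid_take'[OF assms(1) k]] dotp_add using assms(2)[OF k] by simp
  qed
  show "lchain (adjacent T) (dpath w xs)"
    by (rule chain_dpath) (rule adj_edge[OF valid_take'[OF assms(1)]])
  show "set (dpath w xs) \<subseteq> verts T"
    using dpath_set valid_take[OF assms(1)] unfolding verts_def by blast
qed

lemma up_path:
  assumes "valid_pos T (w @ xs)"
    "\<And>k. k < length xs \<Longrightarrow> dotp d (EE T ((w @ take k xs) @ [xs ! k])) < 0"
  shows "lchain (\<lambda>p q. dotp d (PP T p) < dotp d (PP T q)) (rev (dpath w xs))"
    "lchain (adjacent T) (rev (dpath w xs))"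
    "set (rev (dpath w xs)) \<subseteq> verts T"
proof -
  have m: "dotp (- d) x = - dotp d x" for x unfolding dotp_def by simp
  have c: "lchain (\<lambda>p q. dotp (- d) (PP T p) < dotp (- d) (PP T q)) (dpath w xs)"
    by (rule down_path(1)[OF assms(1), where d="- d"]) (use assms(2) m in simp)
  show "lchain (\<lambda>p q. dotp d (PP T p) < dotp d (PP T q)) (rev (dpath w xs))"
    unfolding chain_rev using c by (rule chain_mono) (simp add: m)
  have "lchain (adjacent T) (dpath w xs)" by (rule down_path(2)[OF assms(1), where d="- d"]) (use assms(2) m in simp)
  thus "lchain (adjacent T) (rev (dpath w xs))" unfolding chain_rev by (rule chain_mono) (rule adj_sym)
  have "set (dpath w xs) \<subseteq> verts T" by (rule down_path(3)[OF assms(1), where d="- d"]) (use assms(2) m in simp)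
  thus "set (rev (dpath w xs)) \<subseteq> verts T" by simp
qed

lemma mono_from_chain: "d \<noteq> (0,0) \<Longrightarrow> lchain (\<lambda>p q. dotp d (PP T p) < dotp d (PP T q)) vs \<Longrightarrow>
  monotone_points (map (pt (alg1 T)) vs)"
  unfolding monotone_points_def chain_nth PP_def by (intro exI[of _ d]) auto

lemma path_from_chain: "vs \<noteq> [] \<Longrightarrow> hd vs = u \<Longrightarrow> last vs = v \<Longrightarrow> set vs \<subseteq> verts T \<Longrightarrow>
  lchain (adjacent T) vs \<Longrightarrow> is_tree_path T vs u v"
  unfolding is_tree_path_def chain_nth by auto

lemma sep_dir: assumes "valid_pos T (w @ [i])" "valid_pos T (w @ [j])" "i \<noteq> j"
  shows "\<exists>d. d \<noteq> (0,0) \<and> (\<forall>x. KK T (w @ [i]) x \<longrightarrow> dotp d x < 0) \<and> (\<forall>y. KK T (w @ [j]) y \<longrightarrow> 0 < dotp d y)"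
proof (cases "i < j")
  case True
  define b where "b = snd (AA T (w @ [i]))"
  have bnd: "0 \<le> b" "b \<le> fst (AA T (w @ [j]))" "fst (AA T (w @ [j])) \<le> pi/2"
    using sib[OF assms(2) True] AA_ok[OF assms(1)] AA_ok[OF assms(2)] unfolding b_def by linarith+
  have nz: "(- sin b, cos b) \<noteq> (0,0)"
  proof
    assume "(- sin b, cos b) = (0,0)"
    hence "sin b = 0" "cos b = 0" by auto
    thus False using sin_cos_squared_add[of b] by simp
  qed
  show ?thesis
  proof (intro exI conjI allI impI)
    show "(- sin b, cos b) \<noteq> (0,0)" by (rule nz)
    fix x assume "KK T (w @ [i]) x"
    from cone_right[OF this[unfolded KK_def]] show "dotp (- sin b, cos b) x < 0"
      unfolding dotp_def b_def by (simp add: algebra_simps)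
  next
    fix y assume "KK T (w @ [j]) y"
    from cone_left[OF this[unfolded KK_def] bnd] show "0 < dotp (- sin b, cos b) y"
      unfolding dotp_def by (simp add: algebra_simps)
  qed
next
  case False
  hence ji: "j < i" using assms(3) by simp
  define b where "b = snd (AA T (w @ [j]))"
  have bnd: "0 \<le> b" "b \<le> fst (AA T (w @ [i]))" "fst (AA T (w @ [i])) \<le> pi/2"
    using sib[OF assms(1) ji] AA_ok[OF assms(1)] AA_ok[OF assms(2)] unfolding b_def by linarith+
  have nz: "(sin b, - cos b) \<noteq> (0,0)"
  proof
    assume "(sin b, - cos b) = (0,0)"
    hence "sin b = 0" "cos b = 0" by auto
    thus False using sin_cos_squared_add[of b] by simp
  qed
  show ?thesis
  proof (intro exI conjI allI impI)
    show "(sin b, - cos b) \<noteq> (0,0)" by (rule nz)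
    fix x assume "KK T (w @ [i]) x"
    from cone_left[OF this[unfolded KK_def] bnd] show "dotp (sin b, - cos b) x < 0"
      unfolding dotp_def by (simp add: algebra_simps)
  next
    fix y assume "KK T (w @ [j]) y"
    from cone_right[OF this[unfolded KK_def]] show "0 < dotp (sin b, - cos b) y"
      unfolding dotp_def b_def by (simp add: algebra_simps)
  qed
qed

lemma EE_in_sub: assumes "valid_pos T ((w @ [i]) @ xs)" "k < length (i # xs)"
  shows "KK T (w @ [i]) (EE T ((w @ take k (i # xs)) @ [(i # xs) ! k]))"
proof -
  have e: "(w @ take k (i # xs)) @ [(i # xs) ! k] = (w @ [i]) @ take k xs"
    using assms(2) by (cases k) (auto simp: take_Suc_conv_app_nth)
  have "valid_pos T ((w @ [i]) @ take k xs)" using valid_take[OF assms(1)] .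
  thus ?thesis unfolding e by (rule EE_nest)
qed

lemma monotone_thm: "monotone_drawing T (alg1 T)"
  unfolding monotone_drawing_def
proof (intro ballI)
  fix u v assume uv: "u \<in> verts T" "v \<in> verts T"
  hence vu: "valid_pos T u" and vv: "valid_pos T v" unfolding verts_def by auto
  have pos: "0 < dotp (1,1) (EE T p)" "dotp (-1,-1) (EE T p) < 0" if "valid_pos T p" for p
    using EE_cone(2,3)[OF that] unfolding dotp_def by auto
  from split3[of v u] show "\<exists>vs. is_tree_path T vs u v \<and> monotone_points (map (pt (alg1 T)) vs)"
  proof (elim disjE exE conjE)
    fix r assume r: "v = u @ r"
    have a: "valid_pos T (u @ r)" using vv r by simp
    have h: "0 < dotp (1,1) (EE T ((u @ take k r) @ [r ! k]))" if "k < length r" for k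
      using pos(1)[OF valid_take'[OF a that]] .
    note D = down_path[OF a h]
    show ?thesis
      by (intro exI[of _ "dpath u r"] conjI path_from_chain mono_from_chain[of "(1,1)"] D)
         (simp_all add: dpath_ne dpath_hd dpath_last r)
  next
    fix r assume r: "u = v @ r"
    have a: "valid_pos T (v @ r)" using vu r by simp
    have h: "dotp (-1,-1) (EE T ((v @ take k r) @ [r ! k])) < 0" if "k < length r" for k
      using pos(2)[OF valid_take'[OF a that]] .
    note D = up_path[OF a h]
    show ?thesis
      by (intro exI[of _ "rev (dpath v r)"] conjI path_from_chain mono_from_chain[of "(-1,-1)"] D)
         (simp_all add: dpath_ne dpath_hd dpath_last r hd_rev last_rev)
  next
    fix w i j r s assume h: "i \<noteq> j" "u = w @ i # r" "v = w @ j # s"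
    have a1: "valid_pos T (w @ (i # r))" using vu h by simp
    have a2: "valid_pos T (w @ (j # s))" using vv h by simp
    have vi: "valid_pos T (w @ [i])" using valid_take[OF a1, of 1] by simp
    have vj: "valid_pos T (w @ [j])" using valid_take[OF a2, of 1] by simp
    obtain d where d: "d \<noteq> (0,0)" "\<And>x. KK T (w @ [i]) x \<Longrightarrow> dotp d x < 0" "\<And>y. KK T (w @ [j]) y \<Longrightarrow> 0 < dotp d y"
      using sep_dir[OF vi vj h(1)] by blast
    have up: "dotp d (EE T ((w @ take k (i # r)) @ [(i # r) ! k])) < 0" if "k < length (i # r)" for k
      using d(2)[OF EE_in_sub[OF _ that]] a1 by simp
    have dn: "0 < dotp d (EE T ((w @ take k (j # s)) @ [(j # s) ! k]))" if "k < length (j # s)" for k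
      using d(3)[OF EE_in_sub[OF _ that]] a2 by simp
    note U = up_path[OF a1 up] and D = down_path[OF a2 dn]
    define vs where "vs = rev (dpath w (i # r)) @ dpath (w @ [j]) s"
    have D': "dotp d (PP T w) < dotp d (PP T (w @ [j]))" "lchain (\<lambda>p q. dotp d (PP T p) < dotp d (PP T q)) (dpath (w @ [j]) s)"
      "adjacent T w (w @ [j])" "lchain (adjacent T) (dpath (w @ [j]) s)" "set (dpath (w @ [j]) s) \<subseteq> verts T"
      using D by (auto simp: chain_Cons dpath_hd dpath_ne)
    have lr: "last (rev (dpath w (i # r))) = w" by (simp add: last_rev dpath_hd)
    have "is_tree_path T vs u v"
      by (rule path_from_chain)
         (use U D' lr h in \<open>auto simp: vs_def chain_append chain_Cons dpath_ne dpath_hd dpath_last hd_rev\<close>)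
    moreover have "monotone_points (map (pt (alg1 T)) vs)"
      by (rule mono_from_chain[OF d(1)]) (use U D' lr in \<open>auto simp: vs_def chain_append chain_Cons dpath_ne dpath_hd\<close>)
    ultimately show ?thesis by blast
  qed
qed




lemma EE_dot: "valid_pos T p \<Longrightarrow> valid_pos T q \<Longrightarrow> 0 < dotp (EE T p) (EE T q)"
  using EE_cone(2,3)[of T p] EE_cone(2,3)[of T q] unfolding dotp_def
  by (smt (verit) mult_pos_pos)

lemma EE_nz: "valid_pos T p \<Longrightarrow> EE T p \<noteq> (0,0)"
  using EE_cone(2)[of T p] by auto

lemma EE_crs: assumes "valid_pos T (u @ [j])" "i < j" shows "0 < crs (EE T (u @ [i])) (EE T (u @ [j]))"
proof -
  have vu: "valid_pos T u" using assms(1) valid_append by auto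
  have vi: "valid_pos T (u @ [i])" using assms valid_append[of T u "[i]"] valid_append[of T u "[j]"] by auto
  note s = sib[OF assms]
  note a1 = AA_ok[OF vi] and a2 = AA_ok[OF assms(1)]
  show ?thesis
    by (rule cross_pos[OF EE_cone(1)[OF vi, unfolded KK_def] EE_cone(1)[OF assms(1), unfolded KK_def] s])
       (use a1 a2 EE_cone(2,3)[OF vi] EE_cone(2,3)[OF assms(1)] in linarith)+
qed

lemma respects: "respects_order T (alg1 T)"
  unfolding respects_order_def Let_def
proof (intro ballI conjI impI allI)
  fix u assume "u \<in> verts T"
  hence vu: "valid_pos T u" by (simp add: verts_def)
  have vc: "valid_pos T (u @ [j])" if "j < length (kids (subtree T u))" for j
    using that vu valid_append[of T u "[j]"] by simp
  have vec_c: "vec (alg1 T) u (u @ [j]) = EE T (u @ [j])" if "j < length (kids (subtree T u))" for j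
    using edge_pos[OF vc[OF that]] unfolding vec_def PP_def by simp
  {
    fix i j assume u: "u \<noteq> []" and ij: "i < j \<and> j < length (kids (subtree T u))"
    obtain p c where pc: "u = p @ [c]" using u by (cases u rule: rev_cases) auto
    have vp: "vec (alg1 T) u (butlast u) = - EE T u"
      using edge_pos[of T p c] vu unfolding vec_def PP_def pc by simp
    have ji: "i < length (kids (subtree T u))" using ij by simp
    have d1: "0 < dotp (EE T u) (EE T (u @ [i]))" by (rule EE_dot[OF vu vc[OF ji]])
    have d2: "0 < dotp (EE T u) (EE T (u @ [j]))" by (rule EE_dot[OF vu vc]) (use ij in simp)
    have c: "0 < crs (EE T (u @ [i])) (EE T (u @ [j]))" by (rule EE_crs[OF vc]) (use ij in simp_all)
    have "crs (EE T u) (EE T (u @ [i])) / dotp (EE T u) (EE T (u @ [i])) <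
          crs (EE T u) (EE T (u @ [j])) / dotp (EE T u) (EE T (u @ [j]))"
      by (rule ratio_mono[OF d1 d2 c EE_nz[OF vu]])
    thus "ccw_angle (vec (alg1 T) u (butlast u)) (vec (alg1 T) u (u @ [i]))
        < ccw_angle (vec (alg1 T) u (butlast u)) (vec (alg1 T) u (u @ [j]))"
      unfolding vp vec_c[OF ji] vec_c[of j, OF conjunct2[OF ij]]
        ccw_nonroot[OF d1 EE_nz[OF vu]] ccw_nonroot[OF d2 EE_nz[OF vu]]
      by (simp add: arctan_less_iff)
  next
    fix i j assume u: "u = []" and ij: "0 < i \<and> i < j \<and> j < length (kids (subtree T u))"
    have j: "j < length (kids (subtree T u))" and ji: "i < length (kids (subtree T u))"
      and z: "0 < length (kids (subtree T u))" using ij by auto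
    have v0: "valid_pos T (u @ [0])" by (rule vc[OF z])
    have d1: "0 < dotp (EE T (u @ [0])) (EE T (u @ [i]))" by (rule EE_dot[OF v0 vc[OF ji]])
    have d2: "0 < dotp (EE T (u @ [0])) (EE T (u @ [j]))" by (rule EE_dot[OF v0 vc[OF j]])
    have c: "0 < crs (EE T (u @ [i])) (EE T (u @ [j]))" by (rule EE_crs[OF vc[OF j]]) (use ij in simp)
    have c1: "0 < crs (EE T (u @ [0])) (EE T (u @ [i]))" by (rule EE_crs[OF vc[OF ji]]) (use ij in simp)
    have c2: "0 < crs (EE T (u @ [0])) (EE T (u @ [j]))" by (rule EE_crs[OF vc[OF j]]) (use ij in simp)
    have "crs (EE T (u @ [0])) (EE T (u @ [i])) / dotp (EE T (u @ [0])) (EE T (u @ [i])) <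
          crs (EE T (u @ [0])) (EE T (u @ [j])) / dotp (EE T (u @ [0])) (EE T (u @ [j]))"
      by (rule ratio_mono[OF d1 d2 c EE_nz[OF v0]])
    thus "ccw_angle (vec (alg1 T) u (u @ [0])) (vec (alg1 T) u (u @ [i]))
        < ccw_angle (vec (alg1 T) u (u @ [0])) (vec (alg1 T) u (u @ [j]))"
      unfolding vec_c[OF z] vec_c[OF ji] vec_c[OF j]
        ccw_root[OF d1 c1 EE_nz[OF v0]] ccw_root[OF d2 c2 EE_nz[OF v0]]
      by (simp add: arctan_less_iff)
  }
qed


theorem theorem4:
  fixes T :: otree
  shows "monotone_drawing T (alg1 T) \<and> planar_drawing T (alg1 T) \<and>
         alg1 T [] = (0, 0) \<and> respects_order T (alg1 T) \<and>
         (\<forall>p\<in>verts T. fst (alg1 T p) \<in> {0 .. int (card (verts T)) - 1} \<and>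
                       snd (alg1 T p) \<in> {0 .. int (card (verts T)) - 1})"
    using monotone_thm[of T] planar[of T] respects[of T] grid[of _ T]
  by (simp add: alg1_def)

end
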